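(* Let $\Lambda$ be a full-rank lattice in $\mathbb{R}^n$ and assume $B\ge 8n^{n/2}\,\nu(\Lambda)$. Let $X := (\Lambda\cap[0,B)^n)^n$ and $Y := \{(y_1,\dots,y_n)\in X \mid \operatorname{span}_{\mathbb{R}}(y_1,\dots,y_n)=\mathbb{R}^n\}$. Then $|Y|\ge \tfrac12 |X|$.
   Context: $\nu(\Lambda)=\sup_{x\in\mathbb{R}^n}\min_{\lambda\in\Lambda}\|x-\lambda\|_2$ is the covering radius of $\Lambda$. *)

theory Defs
  imports "HOL-Analysis.Analysis"
begin

definition full_rank_lattice :: "(real^'n) set \<Rightarrow> bool" where
  "full_rank_lattice L \<longleftrightarrow>
     (\<exists>b :: 'n \<Rightarrow> real^'n. inj b \<and> independent (range b) \<and>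
        L = {x. \<exists>c :: 'n \<Rightarrow> int. x = (\<Sum>i\<in>UNIV. of_int (c i) *\<^sub>R b i)})"

definition covering_radius :: "(real^'n) set \<Rightarrow> real" where
  "covering_radius L = (SUP x. INF l\<in>L. norm (x - l))"

end

theory Submission
  imports Defs
begin

proposition measure_linear_image_fin:
 fixes f :: "real^'n \<Rightarrow> real^'n"
  assumes "linear f" "S \<in> lmeasurable"
  shows "(f ` S) \<in> lmeasurable \<and> measure lebesgue (f ` S) = \<bar>det (matrix f)\<bar> * measure lebesgue S"
proof -
  have "\<forall>S \<in> lmeasurable. (f ` S) \<in> lmeasurable \<and> measure lebesgue (f ` S) = \<bar>det (matrix f)\<bar> * measure lebesgue S"
  proof (rule induct_linear_elementary [OF \<open>linear f\<close>]; intro ballI)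
    fix f g :: "real^'n \<Rightarrow> real^'n" and S :: "(real,'n) vec set"
    assume "linear f" and "linear g"
      and f [rule_format]: "\<forall>S \<in> lmeasurable. f ` S \<in> lmeasurable \<and> measure lebesgue (f ` S) = \<bar>det (matrix f)\<bar> * measure lebesgue S"
      and g [rule_format]: "\<forall>S \<in> lmeasurable. g ` S \<in> lmeasurable \<and> measure lebesgue (g ` S) = \<bar>det (matrix g)\<bar> * measure lebesgue S"
      and S: "S \<in> lmeasurable"
    then have gS: "g ` S \<in> lmeasurable"
      by blast
    show "(f \<circ> g) ` S \<in> lmeasurable \<and> measure lebesgue ((f \<circ> g) ` S) = \<bar>det (matrix (f \<circ> g))\<bar> * measure lebesgue S"
      using f [OF gS] g [OF S] matrix_compose [OF \<open>linear g\<close> \<open>linear f\<close>]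
      by (simp add: o_def image_comp abs_mult det_mul)
  next
    fix f :: "real^'n::_ \<Rightarrow> real^'n::_" and i and S :: "(real^'n::_) set"
    assume "linear f" and 0: "\<And>x. f x $ i = 0" and "S \<in> lmeasurable"
    then have "\<not> inj f"
      by (metis (full_types) linear_injective_imp_surjective one_neq_zero surjE vec_component)
    have detf: "det (matrix f) = 0"
      using \<open>\<not> inj f\<close> det_nz_iff_inj[OF \<open>linear f\<close>] by blast
    show "f ` S \<in> lmeasurable \<and> measure lebesgue (f ` S) = \<bar>det (matrix f)\<bar> * measure lebesgue S"
    proof
      show "f ` S \<in> lmeasurable"
        using lmeasurable_iff_indicator_has_integral \<open>linear f\<close> \<open>\<not> inj f\<close> negligible_UNIV negligible_linear_singular_image by blast
      have "measure lebesgue (f ` S) = 0"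
        by (meson \<open>\<not> inj f\<close> \<open>linear f\<close> negligible_imp_measure0 negligible_linear_singular_image)
      also have "\<dots> = \<bar>det (matrix f)\<bar> * measure lebesgue S"
        by (simp add: detf)
      finally show "measure lebesgue (f ` S) = \<bar>det (matrix f)\<bar> * measure lebesgue S" .
    qed
  next
    fix c and S :: "(real^'n::_) set"
    assume "S \<in> lmeasurable"
    show "(\<lambda>a. \<chi> i. c i * a $ i) ` S \<in> lmeasurable \<and> measure lebesgue ((\<lambda>a. \<chi> i. c i * a $ i) ` S) = \<bar>det (matrix (\<lambda>a. \<chi> i. c i * a $ i))\<bar> * measure lebesgue S"
    proof
      show "(\<lambda>a. \<chi> i. c i * a $ i) ` S \<in> lmeasurable"
        by (simp add: \<open>S \<in> lmeasurable\<close> measurable_stretch)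
      show "measure lebesgue ((\<lambda>a. \<chi> i. c i * a $ i) ` S) = \<bar>det (matrix (\<lambda>a. \<chi> i. c i * a $ i))\<bar> * measure lebesgue S"
        by (simp add: measure_stretch [OF \<open>S \<in> lmeasurable\<close>, of c] axis_def matrix_def det_diagonal)
    qed
  next
    fix m :: "'n" and n :: "'n" and S :: "(real, 'n) vec set"
    assume "m \<noteq> n" and "S \<in> lmeasurable"
    let ?h = "\<lambda>v::(real, 'n) vec. \<chi> i. v $ Transposition.transpose m n i"
    have lin: "linear ?h"
      by (rule linearI) (simp_all add: plus_vec_def scaleR_vec_def)
    have meq: "measure lebesgue ((\<lambda>v::(real, 'n) vec. \<chi> i. v $ Transposition.transpose m n i) ` cbox a b)
             = measure lebesgue (cbox a b)" for a b
    proof (cases "cbox a b = {}")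
      case True then show ?thesis
        by simp
    next
      case False
      then have him: "?h ` (cbox a b) \<noteq> {}"
        by blast
      have eq: "?h ` (cbox a b) = cbox (?h a) (?h b)"
        by (auto simp: image_iff lambda_swap_Galois mem_box_cart) (metis transpose_involutory)+
      show ?thesis
        using him prod.permute [OF permutes_swap_id, where S=UNIV and g="\<lambda>i. (b - a)$i", symmetric]
        by (simp add: eq content_cbox_cart False)
    qed
    have "(\<chi> i j. if Transposition.transpose m n i = j then 1 else 0) = (\<chi> i j. if j = Transposition.transpose m n i then 1 else (0::real))"
      by (auto intro!: Cart_lambda_cong)
    then have "matrix ?h = transpose(\<chi> i j. mat 1 $ i $ Transposition.transpose m n j)"
      by (auto simp: matrix_eq transpose_def axis_def mat_def matrix_def)
    then have 1: "\<bar>det (matrix ?h)\<bar> = 1"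
      by (simp add: det_permute_columns permutes_swap_id sign_swap_id abs_mult)
    show "?h ` S \<in> lmeasurable \<and> measure lebesgue (?h ` S) = \<bar>det (matrix ?h)\<bar> * measure lebesgue S"
      using measure_linear_sufficient [OF lin \<open>S \<in> lmeasurable\<close>] meq 1 by force
  next
    fix m n :: "'n" and S :: "(real, 'n) vec set"
    assume "m \<noteq> n" and "S \<in> lmeasurable"
    let ?h = "\<lambda>v::(real, 'n) vec. \<chi> i. if i = m then v $ m + v $ n else v $ i"
    have lin: "linear ?h"
      by (rule linearI) (auto simp: algebra_simps plus_vec_def scaleR_vec_def vec_eq_iff)
    have "matrix ?h = (\<chi> k. if k = m then row m (mat 1) + 1 *s row n (mat 1) else row k (mat 1))"
      by (auto simp: matrix_def vec_eq_iff row_def mat_def axis_def)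
    then have 1: "det(matrix ?h) = 1"
      using det_row_operation[OF \<open>m \<noteq> n\<close>, of "mat 1 :: real^'n^'n" 1] by simp
    have meq: "measure lebesgue (?h ` (cbox a b)) = measure lebesgue (cbox a b)" for a b
    proof (cases "cbox a b = {}")
      case True then show ?thesis by simp
    next
      case False
      then have ne: "(+) (\<chi> i. if i = n then - a $ n else 0) ` cbox a b \<noteq> {}"
        by auto
      let ?v = "\<chi> i. if i = n then - a $ n else 0"
      have "?h ` cbox a b
            = (+) (\<chi> i. if i = m \<or> i = n then a $ n else 0) ` ?h ` (+) ?v ` (cbox a b)"
        using \<open>m \<noteq> n\<close> unfolding image_comp o_def by (force simp: vec_eq_iff)
      then have "measure lebesgue (?h ` (cbox a b))
               = measure lebesgue ((\<lambda>v. \<chi> i. if i = m then v $ m + v $ n else v $ i) `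
                                   (+) ?v ` cbox a b)"
        by (rule ssubst) (rule measure_translation)
      also have "\<dots> = measure lebesgue ((\<lambda>v. \<chi> i. if i = m then v $ m + v $ n else v $ i) ` cbox (?v +a) (?v + b))"
        by (metis (no_types, lifting) cbox_translation)
      also have "\<dots> = measure lebesgue ((+) ?v ` cbox a b)"
        apply (subst measure_shear_interval)
        using \<open>m \<noteq> n\<close> ne apply auto
        apply (simp add: cbox_translation)
        by (metis cbox_borel cbox_translation measure_completion sets_lborel)
      also have "\<dots> = measure lebesgue (cbox a b)"
        by (rule measure_translation)
        finally show ?thesis .
      qed
    show "?h ` S \<in> lmeasurable \<and> measure lebesgue (?h ` S) = \<bar>det (matrix ?h)\<bar> * measure lebesgue S"
      using measure_linear_sufficient [OF lin \<open>S \<in> lmeasurable\<close>] meq 1 by force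
  qed
  with assms show ?thesis
    by metis
qed

lemma det_rowrep:
  fixes u :: "real^'n"
  shows "det (\<chi> r c. if r = i then u$c else mat 1 $ r $ c :: real^'n^'n) = u$i"
proof -
  define A0 :: "real^'n^'n" where "A0 = (\<chi> k. if k = i then (u$i) *s row k (mat 1) else row k (mat 1))"
  define x :: "real^'n" where "x = (\<Sum>j\<in>UNIV-{i}. (u$j) *s row j (mat 1))"
  have rA: "row j A0 = (if j = i then (u$i) *s row j (mat 1) else row j (mat 1))" for j
    by (simp add: A0_def row_def)
  have x: "x \<in> vec.span {row j A0 |j. j \<noteq> i}"
    unfolding x_def
    by (intro vec.span_sum vec.span_scale vec.span_base) (auto simp: rA)
  have "(\<chi> r c. if r = i then u$c else mat 1 $ r $ c :: real^'n^'n) = (\<chi> k. if k = i then row i A0 + x else row k A0)"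
  proof -
    have "(u$i) *s row i (mat 1) + x = u"
    proof -
      have "(u$i) *s row i (mat 1) + x = (\<Sum>j\<in>UNIV. (u$j) *s row j (mat 1))"
        unfolding x_def by (simp add: sum.remove[of UNIV i])
      also have "\<dots> = u"
        by (auto simp: vec_eq_iff row_def mat_def sum_component if_distrib cong: if_cong)
      finally show ?thesis .
    qed
    then show ?thesis
      by (auto simp: vec_eq_iff A0_def row_def)
  qed
  also have "det \<dots> = det A0" by (rule det_row_span[OF x])
  also have "\<dots> = u$i * det (\<chi> k. if k = i then row k (mat 1) else row k (mat 1) :: real^'n^'n)"
    unfolding A0_def by (rule det_row_mul)
  also have "(\<chi> k. if k = i then row k (mat 1) else row k (mat 1) :: real^'n^'n) = mat 1"
    by (simp add: vec_eq_iff row_def)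
  finally show ?thesis by simp
qed

lemma slab_measure:
  fixes u :: "real^'n"
  assumes ui: "u$i \<noteq> 0" and d: "0 \<le> \<delta>" and lh: "lo \<le> hi"
  defines "A \<equiv> {y. (\<forall>j. lo \<le> y$j \<and> y$j \<le> hi) \<and> \<bar>u \<bullet> y\<bar> \<le> \<delta>}"
  shows "A \<in> lmeasurable" "measure lebesgue A * \<bar>u$i\<bar> \<le> (hi - lo) ^ (CARD('n) - 1) * (2 * \<delta>)"
proof -
  define M :: "real^'n^'n" where "M = (\<chi> r c. if r = i then u$c else mat 1 $ r $ c)"
  define \<phi> where "\<phi> = (\<lambda>y. M *v y)"
  have lin: "linear \<phi>" unfolding \<phi>_def by (simp add: matrix_vector_mul_linear)
  have mat: "matrix \<phi> = M" unfolding \<phi>_def by simp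
  have detM: "det M = u$i" unfolding M_def by (rule det_rowrep)
  have phi: "\<phi> y $ r = (if r = i then u \<bullet> y else y $ r)" for y r
    by (cases "r = i") (auto simp: \<phi>_def M_def matrix_vector_mult_def inner_vec_def mat_def if_distrib[of "\<lambda>x. x * _"] cong: if_cong)
  have "compact A"
  proof -
    have "A = cbox (\<chi> j. lo) (\<chi> j. hi) \<inter> {y. \<bar>u \<bullet> y\<bar> \<le> \<delta>}"
      by (auto simp: A_def mem_box_cart)
    moreover have "closed {y::real^'n. \<bar>u \<bullet> y\<bar> \<le> \<delta>}"
      by (intro closed_Collect_le continuous_intros)
    ultimately show ?thesis by (simp add: compact_Int_closed)
  qed
  then show Am: "A \<in> lmeasurable" by (rule lmeasurable_compact)
  have eq: "measure lebesgue (\<phi> ` A) = \<bar>u$i\<bar> * measure lebesgue A"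
    using measure_linear_image_fin[OF lin Am] by (simp add: mat detM)
  have mA: "\<phi> ` A \<in> lmeasurable"
    using measure_linear_image_fin[OF lin Am] by simp
  define a :: "real^'n" where "a = (\<chi> r. if r = i then -\<delta> else lo)"
  define b :: "real^'n" where "b = (\<chi> r. if r = i then \<delta> else hi)"
  have sub: "\<phi> ` A \<subseteq> cbox a b"
    by (auto simp: A_def mem_box_cart a_def b_def phi abs_le_iff)
  have "measure lebesgue (\<phi> ` A) \<le> measure lebesgue (cbox a b)"
    by (rule measure_mono_fmeasurable[OF sub]) (use mA in auto)
  also have "measure lebesgue (cbox a b) = (\<Prod>r\<in>UNIV. b$r - a$r)"
  proof -
    have "cbox a b \<noteq> {}" using d lh by (auto simp: a_def b_def interval_ne_empty_cart)
    then show ?thesis by (simp add: content_cbox_if_cart)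
  qed
  also have "\<dots> = (b$i - a$i) * (\<Prod>r\<in>UNIV-{i}. b$r - a$r)"
    by (simp add: prod.remove[of UNIV i])
  also have "(\<Prod>r\<in>UNIV-{i}. b$r - a$r) = (hi - lo) ^ (CARD('n) - 1)"
    by (simp add: a_def b_def card_Diff_singleton)
  finally show "measure lebesgue A * \<bar>u$i\<bar> \<le> (hi - lo) ^ (CARD('n) - 1) * (2 * \<delta>)"
    using eq by (simp add: a_def b_def algebra_simps)
qed

locale lbasis =
  fixes b :: "'n::finite \<Rightarrow> real^'n"
  assumes injb: "inj b" and indb: "independent (range b)"
begin

definition T :: "real^'n \<Rightarrow> real^'n" where "T t = (\<Sum>i\<in>UNIV. (t$i) *\<^sub>R b i)"
definition Lat :: "(real^'n) set" where
  "Lat = {x. \<exists>c :: 'n \<Rightarrow> int. x = (\<Sum>i\<in>UNIV. of_int (c i) *\<^sub>R b i)}"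

lemma linT: "linear T"
  unfolding T_def by (intro linear_compose_sum) (auto intro!: linearI simp: algebra_simps)

lemma T_zero: "T t = 0 \<Longrightarrow> t = 0"
proof -
  assume 0: "T t = 0"
  have fin: "finite (range b)" by simp
  define c where "c v = t $ (inv b v)" for v
  have "(\<Sum>v\<in>range b. c v *\<^sub>R v) = (\<Sum>i\<in>UNIV. c (b i) *\<^sub>R b i)"
    by (simp add: sum.reindex[OF injb])
  also have "\<dots> = T t" by (simp add: c_def T_def inv_f_f[OF injb])
  finally have "(\<Sum>v\<in>range b. c v *\<^sub>R v) = 0" using 0 by simp
  with indb have "\<forall>v\<in>range b. c v = 0"
    by (auto simp: independent_explicit)
  then show "t = 0"
    by (auto simp: vec_eq_iff c_def inv_f_f[OF injb])
qed

lemma injT: "inj T"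
proof (rule injI)
  fix x y assume "T x = T y"
  then have "T (x - y) = 0" by (simp add: linear_diff[OF linT])
  then show "x = y" using T_zero[of "x - y"] by simp
qed

lemma surjT: "surj T"
  using linT injT by (simp add: linear_injective_imp_surjective)

lemma Lat_T: "Lat = T ` {t. \<forall>i. t$i \<in> \<int>}"
proof
  show "Lat \<subseteq> T ` {t. \<forall>i. t$i \<in> \<int>}"
  proof
    fix x assume "x \<in> Lat"
    then obtain c :: "'n \<Rightarrow> int" where x: "x = (\<Sum>i\<in>UNIV. of_int (c i) *\<^sub>R b i)" by (auto simp: Lat_def)
    then have "x = T (\<chi> i. of_int (c i))" by (simp add: T_def)
    then show "x \<in> T ` {t. \<forall>i. t$i \<in> \<int>}" by auto
  qed
  show "T ` {t. \<forall>i. t$i \<in> \<int>} \<subseteq> Lat"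
  proof
    fix x assume "x \<in> T ` {t. \<forall>i. t$i \<in> \<int>}"
    then obtain t where t: "\<forall>i. t$i \<in> \<int>" "x = T t" by auto
    define c where "c i = \<lfloor>t$i\<rfloor>" for i
    have "of_int (c i) = t$i" for i using t(1) by (simp add: c_def)
    then have "x = (\<Sum>i\<in>UNIV. of_int (c i) *\<^sub>R b i)" by (simp add: t(2) T_def)
    then show "x \<in> Lat" by (auto simp: Lat_def)
  qed
qed

lemma Lat_add: "x \<in> Lat \<Longrightarrow> y \<in> Lat \<Longrightarrow> x + y \<in> Lat"
proof -
  assume "x \<in> Lat" "y \<in> Lat"
  then obtain s t where "x = T s" "y = T t" "\<forall>i. s$i \<in> \<int>" "\<forall>i. t$i \<in> \<int>" by (auto simp: Lat_T)
  then show ?thesis unfolding Lat_T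
    by (intro image_eqI[of _ _ "s + t"]) (auto simp: linear_add[OF linT])
qed

lemma Lat_diff: "x \<in> Lat \<Longrightarrow> y \<in> Lat \<Longrightarrow> x - y \<in> Lat"
proof -
  assume "x \<in> Lat" "y \<in> Lat"
  then obtain s t where "x = T s" "y = T t" "\<forall>i. s$i \<in> \<int>" "\<forall>i. t$i \<in> \<int>" by (auto simp: Lat_T)
  then show ?thesis unfolding Lat_T
    by (intro image_eqI[of _ _ "s - t"]) (auto simp: linear_diff[OF linT])
qed

lemma Lat_0: "0 \<in> Lat"
  unfolding Lat_T by (intro image_eqI[of _ _ 0]) (auto simp: linear_0[OF linT])

lemma countable_Lat: "countable Lat"
proof -
  have "Lat = (\<lambda>c::'n\<Rightarrow>int. \<Sum>i\<in>UNIV. of_int (c i) *\<^sub>R b i) ` UNIV"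
    by (auto simp: Lat_def)
  then show ?thesis by simp
qed

lemma finite_Lat_bounded:
  assumes "bounded A" shows "finite (Lat \<inter> A)"
proof -
  obtain K0 where K0: "K0 > 0" "\<And>x. K0 * norm x \<le> norm (T x)"
    using linear_inj_bounded_below_pos[OF linT injT] by metis
  define K where "K = 1 / K0"
  have K: "K > 0" "\<And>t. norm t \<le> norm (T t) * K"
  proof -
    show "K > 0" using K0 by (simp add: K_def)
    fix t show "norm t \<le> norm (T t) * K" using K0(2)[of t] K0(1) by (simp add: K_def field_simps)
  qed
  obtain r where r: "\<And>x. x \<in> A \<Longrightarrow> norm x \<le> r"
    using assms unfolding bounded_iff by blast
  define M :: int where "M = \<lceil>r * K\<rceil>"
  define F where "F = (\<lambda>c::'n\<Rightarrow>int. T (\<chi> i. of_int (c i))) ` (PiE UNIV (\<lambda>_. {-M..M}))"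
  have "finite (PiE (UNIV::'n set) (\<lambda>_. {-M..M}))" by (rule finite_PiE) simp_all
  then have "finite F" unfolding F_def by (rule finite_imageI)
  moreover have "Lat \<inter> A \<subseteq> F"
  proof
    fix x assume x: "x \<in> Lat \<inter> A"
    then obtain t where t: "\<forall>i. t$i \<in> \<int>" "x = T t" unfolding Lat_T by blast
    have nx: "norm x \<le> r" using r x by blast
    have bnd: "\<bar>t$i\<bar> \<le> r * K" for i
    proof -
      have "\<bar>t$i\<bar> \<le> norm t" by (rule component_le_norm_cart)
      also have "\<dots> \<le> norm x * K" using K(2)[of t] t(2) by simp
      also have "\<dots> \<le> r * K" using nx K(1) by (simp add: mult_right_mono)
      finally show ?thesis .
    qed
    define c where "c i = \<lfloor>t$i\<rfloor>" for i
    have ci: "of_int (c i) = t$i" for i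
    proof -
      have "t$i \<in> \<int>" using t(1) by blast
      then show ?thesis unfolding c_def by (metis Ints_cases floor_of_int)
    qed
    have tc: "t = (\<chi> i. of_int (c i))" by (simp add: vec_eq_iff ci)
    have cM: "\<bar>c i\<bar> \<le> M" for i
    proof -
      have "\<bar>real_of_int (c i)\<bar> \<le> r * K" using bnd[of i] ci[of i] by simp
      moreover have "r * K \<le> real_of_int M" unfolding M_def by (rule le_of_int_ceiling)
      ultimately have "real_of_int \<bar>c i\<bar> \<le> real_of_int M" by simp
      then show ?thesis by (simp only: of_int_le_iff)
    qed
    have "c \<in> PiE UNIV (\<lambda>_. {-M..M})"
    proof -
      have "c i \<in> {-M..M}" for i using cM[of i] by (simp add: abs_le_iff)
      then show ?thesis by (simp add: PiE_UNIV_domain)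
    qed
    then show "x \<in> F" unfolding F_def using t(2) tc by blast
  qed
  ultimately show ?thesis by (rule finite_subset[rotated])
qed

definition R :: real where "R = (\<Sum>i\<in>UNIV. norm (b i))"

lemma close_point: "\<exists>l\<in>Lat. norm (x - l) \<le> R"
proof -
  obtain t where t: "x = T t" using surjT by (metis surjD)
  define s :: "real^'n" where "s = (\<chi> i. of_int \<lfloor>t$i\<rfloor>)"
  have sL: "T s \<in> Lat" unfolding Lat_T s_def by auto
  have "x - T s = T (t - s)" by (simp add: t linear_diff[OF linT])
  also have "norm \<dots> \<le> (\<Sum>i\<in>UNIV. norm (((t - s)$i) *\<^sub>R b i))"
    unfolding T_def by (rule norm_sum)
  also have "\<dots> \<le> (\<Sum>i\<in>UNIV. norm (b i))"
  proof (rule sum_mono)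
    fix i
    have "0 \<le> (t - s)$i" "(t - s)$i \<le> 1" by (auto simp: s_def) linarith
    then show "norm (((t - s)$i) *\<^sub>R b i) \<le> norm (b i)"
      by (simp add: mult_left_le_one_le)
  qed
  finally show ?thesis using sL unfolding R_def by blast
qed

lemma nearest_point: "\<exists>l\<in>Lat. \<forall>m\<in>Lat. norm (x - l) \<le> norm (x - m)"
proof -
  obtain l0 where l0: "l0 \<in> Lat" "norm (x - l0) \<le> R" using close_point by blast
  define N where "N = Lat \<inter> cball x R"
  have fN: "finite N" unfolding N_def by (rule finite_Lat_bounded) simp
  have l0N: "l0 \<in> N" using l0 by (simp add: N_def dist_norm)
  define d where "d = Min ((\<lambda>m. norm (x - m)) ` N)"
  have "d \<in> (\<lambda>m. norm (x - m)) ` N" unfolding d_def using fN l0N by (intro Min_in) auto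
  then obtain l where l1: "l \<in> N" "norm (x - l) = d" by auto
  have l2: "norm (x - l) \<le> norm (x - m)" if "m \<in> N" for m
    unfolding l1(2) d_def using fN that by (intro Min_le) auto
  note l = l1(1) l2
  have "\<forall>m\<in>Lat. norm (x - l) \<le> norm (x - m)"
  proof
    fix m assume m: "m \<in> Lat"
    show "norm (x - l) \<le> norm (x - m)"
    proof (cases "m \<in> N")
      case True then show ?thesis by (rule l(2))
    next
      case False
      then have "norm (x - m) > R" using m by (auto simp: N_def dist_norm)
      moreover have "norm (x - l) \<le> R" using l(1) by (auto simp: N_def dist_norm)
      ultimately show ?thesis by simp
    qed
  qed
  then show ?thesis using l(1) by (auto simp: N_def)
qed

end

context lbasis begin

definition rho :: "real^'n \<Rightarrow> real" where "rho x = (INF l\<in>Lat. norm (x - l))"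
definition nu :: real where "nu = (SUP x. rho x)"

lemma Lat_ne: "Lat \<noteq> {}" using Lat_0 by blast

lemma bdd_rho: "bdd_below ((\<lambda>l. norm (x - l)) ` Lat)"
  by (rule bdd_belowI2[of _ 0]) simp

lemma rho_le_R: "rho x \<le> R"
proof -
  obtain l where "l \<in> Lat" "norm (x - l) \<le> R" using close_point by blast
  then show ?thesis unfolding rho_def by (intro cINF_lower2[OF bdd_rho])
qed

lemma rho_le_nu: "rho x \<le> nu"
  unfolding nu_def
  by (rule cSUP_upper) (auto intro!: bdd_aboveI2[where M=R] rho_le_R)

lemma rho_ge: "(\<And>l. l \<in> Lat \<Longrightarrow> d \<le> norm (x - l)) \<Longrightarrow> d \<le> rho x"
  unfolding rho_def by (rule cINF_greatest[OF Lat_ne])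

lemma half_not_int: "(1/2::real) \<notin> \<int>"
proof
  assume "(1/2::real) \<in> \<int>"
  then obtain k :: int where k: "1/2 = real_of_int k" by (metis Ints_cases)
  then have "1 = 2 * real_of_int k" by simp
  then have "(1::int) = 2 * k" by (metis of_int_eq_iff of_int_mult of_int_1 of_int_numeral)
  then show False by presburger
qed

lemma nu_pos: "0 < nu"
proof -
  obtain i0 :: 'n where True by blast
  define t :: "real^'n" where "t = (\<chi> j. if j = i0 then 1/2 else 0)"
  define x where "x = T t"
  have xL: "x \<notin> Lat"
  proof
    assume "x \<in> Lat"
    then obtain s where s: "\<forall>i. s$i \<in> \<int>" "x = T s" unfolding Lat_T by blast
    then have "s = t" using injT x_def by (metis injD)
    then have "(1/2::real) \<in> \<int>" using s(1)[rule_format, of i0] by (simp add: t_def)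
    then show False using half_not_int by blast
  qed
  obtain l where l: "l \<in> Lat" "\<forall>m\<in>Lat. norm (x - l) \<le> norm (x - m)"
    using nearest_point by blast
  have "0 < norm (x - l)" using l(1) xL by auto
  also have "norm (x - l) \<le> rho x" using l(2) by (intro rho_ge) auto
  also have "\<dots> \<le> nu" by (rule rho_le_nu)
  finally show ?thesis .
qed

definition V :: "(real^'n) set" where "V = {v. \<forall>l\<in>Lat. norm v \<le> norm (v - l)}"
definition Vo :: "(real^'n) set" where "Vo = {v. \<forall>l\<in>Lat - {0}. norm v < norm (v - l)}"

lemma V_nu: "v \<in> V \<Longrightarrow> norm v \<le> nu"
proof -
  assume "v \<in> V"
  then have "norm v \<le> rho v" unfolding V_def by (intro rho_ge) auto
  then show ?thesis using rho_le_nu[of v] by linarith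
qed

lemma Vo_V: "Vo \<subseteq> V"
proof
  fix v assume v: "v \<in> Vo"
  show "v \<in> V" unfolding V_def
  proof (intro CollectI ballI)
    fix l assume "l \<in> Lat"
    then show "norm v \<le> norm (v - l)" using v unfolding Vo_def
      by (cases "l = 0") (auto intro: less_imp_le)
  qed
qed

lemma V_lmeas: "V \<in> lmeasurable"
proof -
  have "V = (\<Inter>l\<in>Lat. {v. norm v \<le> norm (v - l)})" by (auto simp: V_def)
  moreover have "closed {v::real^'n. norm v \<le> norm (v - l)}" for l
    by (intro closed_Collect_le continuous_intros)
  ultimately have "closed V" by (simp add: closed_INT)
  moreover have "bounded V" using V_nu by (auto simp: bounded_iff)
  ultimately show ?thesis by (intro lmeasurable_compact) (simp add: compact_eq_bounded_closed)
qed

lemma neg_V_Vo: "negligible (V - Vo)"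
proof -
  define N where "N = (\<lambda>l. {v::real^'n. (2 *\<^sub>R l) \<bullet> v = l \<bullet> l}) ` (Lat - {0})"
  have "negligible (\<Union>N)"
  proof (rule negligible_countable_Union)
    show "countable N" unfolding N_def using countable_Lat by simp
    fix S assume "S \<in> N"
    then obtain l where "l \<in> Lat - {0}" "S = {v. (2 *\<^sub>R l) \<bullet> v = l \<bullet> l}" by (auto simp: N_def)
    then show "negligible S" using negligible_hyperplane[of "2 *\<^sub>R l" "l \<bullet> l"] by auto
  qed
  moreover have "V - Vo \<subseteq> \<Union>N"
  proof
    fix v assume v: "v \<in> V - Vo"
    then obtain l where l: "l \<in> Lat - {0}" "\<not> norm v < norm (v - l)" by (auto simp: Vo_def)
    have "norm v \<le> norm (v - l)" using v l by (auto simp: V_def)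
    with l have "norm v = norm (v - l)" by simp
    then have "norm v ^ 2 = norm (v - l) ^ 2" by simp
    then have "v \<bullet> v = (v - l) \<bullet> (v - l)" by (simp add: power2_norm_eq_inner)
    then have "(2 *\<^sub>R l) \<bullet> v = l \<bullet> l" by (simp add: inner_diff_left inner_diff_right inner_commute algebra_simps)
    then show "v \<in> \<Union>N" using l(1) by (auto simp: N_def)
  qed
  ultimately show ?thesis by (rule negligible_subset)
qed

lemma Vo_lmeas: "Vo \<in> lmeasurable"
  by (rule lmeasurable_negligible_symdiff[OF V_lmeas]) (use neg_V_Vo Vo_V in \<open>simp add: Diff_eq_empty_iff[THEN iffD2]\<close>)

lemma measure_Vo: "measure lebesgue Vo = measure lebesgue V"
  by (rule measure_negligible_symdiff[OF V_lmeas]) (use neg_V_Vo Vo_V in \<open>simp add: Diff_eq_empty_iff[THEN iffD2]\<close>)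

lemma cover: "\<exists>l\<in>Lat. x - l \<in> V"
proof -
  obtain l where l: "l \<in> Lat" "\<forall>m\<in>Lat. norm (x - l) \<le> norm (x - m)"
    using nearest_point by blast
  have "x - l \<in> V" unfolding V_def
  proof (intro CollectI ballI)
    fix m assume "m \<in> Lat"
    then have "l + m \<in> Lat" using l(1) Lat_add by blast
    then have "norm (x - l) \<le> norm (x - (l + m))" using l(2) by blast
    then show "norm (x - l) \<le> norm (x - l - m)" by (simp add: algebra_simps)
  qed
  then show ?thesis using l(1) by blast
qed

lemma disj:
  assumes "s \<in> Lat" "s' \<in> Lat" "s \<noteq> s'" "x - s \<in> Vo" "x - s' \<in> Vo"
  shows False
proof -
  have d1: "s' - s \<in> Lat - {0}" using assms Lat_diff by auto
  have d2: "s - s' \<in> Lat - {0}" using assms Lat_diff by auto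
  have "norm (x - s) < norm (x - s - (s' - s))" using assms(4) d1 unfolding Vo_def by blast
  moreover have "norm (x - s') < norm (x - s' - (s - s'))" using assms(5) d2 unfolding Vo_def by blast
  ultimately show False by (simp add: algebra_simps)
qed

end

lemma norm_le_sqrt_card_max:
  fixes u :: "real^'n"
  assumes "\<And>j. \<bar>u$j\<bar> \<le> \<bar>u$i\<bar>"
  shows "norm u \<le> sqrt (real CARD('n)) * \<bar>u$i\<bar>"
proof -
  have "norm u = sqrt (\<Sum>j\<in>UNIV. (u$j)^2)"
    by (simp add: norm_vec_def L2_set_def)
  also have "\<dots> \<le> sqrt (\<Sum>j\<in>(UNIV::'n set). (u$i)^2)"
  proof (intro real_sqrt_le_mono sum_mono)
    fix j show "(u$j)^2 \<le> (u$i)^2" using assms[of j] by (simp add: abs_le_square_iff)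
  qed
  also have "\<dots> = sqrt (real CARD('n) * (u$i)^2)" by simp
  also have "\<dots> = sqrt (real CARD('n)) * \<bar>u$i\<bar>" by (simp add: real_sqrt_mult)
  finally show ?thesis .
qed

context lbasis begin

definition SB :: "real \<Rightarrow> (real^'n) set" where "SB B = {v \<in> Lat. \<forall>j. 0 \<le> v $ j \<and> v $ j < B}"

lemma SB_finite: "finite (SB B)"
proof -
  have "SB B \<subseteq> Lat \<inter> cbox 0 (\<chi> j. B)" by (auto simp: SB_def mem_box_cart less_imp_le)
  moreover have "finite (Lat \<inter> cbox 0 (\<chi> j. B))" by (rule finite_Lat_bounded) simp
  ultimately show ?thesis by (rule finite_subset)
qed

lemma trans_lmeas: "S \<in> lmeasurable \<Longrightarrow> (+) s ` S \<in> lmeasurable"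
  by (rule measurable_translation)

lemma lower_bound:
  assumes B: "2 * nu < B"
  shows "(B - 2 * nu) ^ CARD('n) \<le> real (card (SB B)) * measure lebesgue V"
proof -
  define W :: "(real^'n) set" where "W = box (\<chi> j. nu) (\<chi> j. B - nu)"
  define U where "U = (\<Union>s\<in>SB B. (+) s ` V)"
  have UM: "U \<in> lmeasurable" unfolding U_def
    by (intro fmeasurable.finite_UN SB_finite trans_lmeas V_lmeas)
  have WU: "W \<subseteq> U"
  proof
    fix x assume x: "x \<in> W"
    obtain l where l: "l \<in> Lat" "x - l \<in> V" using cover by blast
    have nl: "norm (x - l) \<le> nu" using V_nu[OF l(2)] .
    have "l \<in> SB B"
      unfolding SB_def
    proof (intro CollectI conjI allI l(1))
      fix j
      have "\<bar>(x - l)$j\<bar> \<le> nu" using component_le_norm_cart[of "x - l" j] nl by linarith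
      moreover have "nu < x$j" "x$j < B - nu" using x by (auto simp: W_def mem_box_cart)
      ultimately show "0 \<le> l$j" "l$j < B" by auto
    qed
    moreover have "x = l + (x - l)" by simp
    ultimately show "x \<in> U" unfolding U_def using l(2) by blast
  qed
  have "measure lebesgue W = measure lebesgue (cbox (\<chi> j. nu) (\<chi> j. B - nu) :: (real^'n) set)"
    unfolding W_def
    by (metis Diff_eq_empty_iff Un_empty_right box_subset_cbox lmeasurable_cbox measure_negligible_symdiff negligible_frontier_interval)
  also have "\<dots> = (\<Prod>j\<in>(UNIV::'n set). (B - nu) - nu)"
  proof -
    have "cbox (\<chi> j. nu) (\<chi> j. B - nu) \<noteq> ({} :: (real^'n) set)" using B by (auto simp: interval_ne_empty_cart)
    then show ?thesis by (simp add: content_cbox_if_cart)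
  qed
  also have "\<dots> = (B - 2 * nu) ^ CARD('n)" by simp
  finally have mW: "measure lebesgue W = (B - 2 * nu) ^ CARD('n)" .
  have "measure lebesgue W \<le> measure lebesgue U"
    by (rule measure_mono_fmeasurable[OF WU]) (auto simp: W_def UM)
  also have "\<dots> \<le> (\<Sum>s\<in>SB B. measure lebesgue ((+) s ` V))"
    unfolding U_def by (intro measure_UNION_le SB_finite) (auto intro: fmeasurableD trans_lmeas V_lmeas)
  also have "\<dots> = real (card (SB B)) * measure lebesgue V" by (simp add: measure_translation)
  finally show ?thesis using mW by simp
qed

lemma upper_bound:
  assumes u: "u \<noteq> 0" and H: "\<And>h. h \<in> H \<Longrightarrow> u \<bullet> h = 0" and B: "0 \<le> B"
  shows "real (card (SB B \<inter> H)) * measure lebesgue V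
           \<le> sqrt (real CARD('n)) * (2 * nu) * (B + 2 * nu) ^ (CARD('n) - 1)"
proof -
  define F where "F = (\<Union>s\<in>SB B \<inter> H. (+) s ` Vo)"
  define A where "A = {y. (\<forall>j. - nu \<le> y$j \<and> y$j \<le> B + nu) \<and> \<bar>u \<bullet> y\<bar> \<le> nu * norm u}"
  obtain i where i: "\<And>j. \<bar>u$j\<bar> \<le> \<bar>u$i\<bar>"
  proof -
    define M where "M = Max (range (\<lambda>j. \<bar>u$j\<bar>))"
    have "M \<in> range (\<lambda>j. \<bar>u$j\<bar>)" unfolding M_def by (intro Max_in) auto
    then obtain i where "M = \<bar>u$i\<bar>" by auto
    moreover have "\<bar>u$j\<bar> \<le> M" for j unfolding M_def by (intro Max_ge) auto
    ultimately show thesis using that by metis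
  qed
  have ui: "u$i \<noteq> 0"
  proof
    assume "u$i = 0"
    then have "u$j = 0" for j using i[of j] by simp
    then show False using u by (simp add: vec_eq_iff)
  qed
  have nupos: "0 \<le> nu" using nu_pos by simp
  have slab: "A \<in> lmeasurable" "measure lebesgue A * \<bar>u$i\<bar> \<le> ((B + nu) - (- nu)) ^ (CARD('n) - 1) * (2 * (nu * norm u))"
    unfolding A_def using slab_measure[OF ui, of "nu * norm u" "- nu" "B + nu"] nupos B by auto
  have FM: "F = (\<Union>s\<in>SB B \<inter> H. (+) s ` Vo)" by (simp add: F_def)
  have fin: "finite (SB B \<inter> H)" using SB_finite by simp
  have mF: "measure lebesgue F = real (card (SB B \<inter> H)) * measure lebesgue V"
  proof -
    have "measure lebesgue F = (\<Sum>s\<in>SB B \<inter> H. measure lebesgue ((+) s ` Vo))"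
      unfolding F_def
    proof (rule measure_UNION'[OF fin])
      show "\<And>s. s \<in> SB B \<inter> H \<Longrightarrow> (+) s ` Vo \<in> lmeasurable" by (intro trans_lmeas Vo_lmeas)
      show "pairwise (\<lambda>s t. disjnt ((+) s ` Vo) ((+) t ` Vo)) (SB B \<inter> H)"
      proof (clarsimp simp: pairwise_def disjnt_def)
        fix s t assume st: "s \<in> SB B" "t \<in> SB B" "s \<noteq> t"
        show "(+) s ` Vo \<inter> (+) t ` Vo = {}"
        proof (rule ccontr)
          assume "(+) s ` Vo \<inter> (+) t ` Vo \<noteq> {}"
          then obtain x where x: "x \<in> (+) s ` Vo" "x \<in> (+) t ` Vo" by blast
          from x(1) obtain a where "a \<in> Vo" "x = s + a" by blast
          then have "x - s \<in> Vo" by simp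
          moreover from x(2) obtain a' where "a' \<in> Vo" "x = t + a'" by blast
          then have "x - t \<in> Vo" by simp
          ultimately have "x - s \<in> Vo" "x - t \<in> Vo" by blast+
          moreover have "s \<in> Lat" "t \<in> Lat" using st by (auto simp: SB_def)
          ultimately show False using disj st(3) by blast
        qed
      qed
    qed
    also have "\<dots> = real (card (SB B \<inter> H)) * measure lebesgue V"
      by (simp add: measure_translation measure_Vo)
    finally show ?thesis .
  qed
  have FA: "F \<subseteq> A"
  proof
    fix y assume "y \<in> F"
    then obtain s v where sv: "s \<in> SB B" "s \<in> H" "v \<in> Vo" "y = s + v" by (auto simp: F_def)
    have nv: "norm v \<le> nu" using V_nu Vo_V sv(3) by blast
    have cj: "\<bar>v$j\<bar> \<le> nu" for j using component_le_norm_cart[of v j] nv by linarith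
    have "u \<bullet> y = u \<bullet> v" using H[OF sv(2)] sv(4) by (simp add: inner_add_right)
    moreover have "\<bar>u \<bullet> v\<bar> \<le> norm u * norm v" by (rule Cauchy_Schwarz_ineq2)
    moreover have "norm u * norm v \<le> nu * norm u" using nv by (simp add: mult.commute mult_left_mono)
    ultimately have "\<bar>u \<bullet> y\<bar> \<le> nu * norm u" by linarith
    moreover have "- nu \<le> y$j \<and> y$j \<le> B + nu" for j
    proof -
      have "0 \<le> s$j" "s$j < B" using sv(1) by (auto simp: SB_def)
      then show ?thesis using cj[of j] sv(4) by (simp add: abs_le_iff)
    qed
    ultimately show "y \<in> A" by (simp add: A_def)
  qed
  have FMeas: "F \<in> sets lebesgue"
    unfolding F_def by (intro fmeasurableD fmeasurable.finite_UN fin trans_lmeas Vo_lmeas)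
  have "measure lebesgue F \<le> measure lebesgue A"
    by (rule measure_mono_fmeasurable[OF FA FMeas slab(1)])
  then have "measure lebesgue F * \<bar>u$i\<bar> \<le> (B + 2 * nu) ^ (CARD('n) - 1) * (2 * (nu * norm u))"
  proof -
    have "measure lebesgue F * \<bar>u$i\<bar> \<le> measure lebesgue A * \<bar>u$i\<bar>"
      using \<open>measure lebesgue F \<le> measure lebesgue A\<close> by (rule mult_right_mono) simp
    moreover have "(B + nu) - (- nu) = B + 2 * nu" by simp
    ultimately show ?thesis using slab(2) by (simp add: add.commute)
  qed
  also have "\<dots> \<le> (B + 2 * nu) ^ (CARD('n) - 1) * (2 * (nu * (sqrt (real CARD('n)) * \<bar>u$i\<bar>)))"
    using norm_le_sqrt_card_max[of u i, OF i] nupos B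
    by (intro mult_left_mono) (auto intro!: mult_left_mono)
  finally have "measure lebesgue F * \<bar>u$i\<bar> \<le> (sqrt (real CARD('n)) * (2 * nu) * (B + 2 * nu) ^ (CARD('n) - 1)) * \<bar>u$i\<bar>"
    by (simp add: algebra_simps)
  then have "measure lebesgue F \<le> sqrt (real CARD('n)) * (2 * nu) * (B + 2 * nu) ^ (CARD('n) - 1)"
    using ui by simp
  then show ?thesis using mF by simp
qed

end

lemma dimUNIV_cart: "dim (UNIV :: (real^'n) set) = CARD('n)"
  by simp

lemma indep_tuple:
  fixes y :: "'n \<Rightarrow> real^'n" and e :: "'n \<Rightarrow> nat"
  assumes e: "bij_betw e UNIV {0..<CARD('n)}"
    and ny: "\<And>k. y k \<notin> span (y ` {j. e j < e k})"
  shows "span (range y) = UNIV"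
proof -
  have ind: "m \<le> CARD('n) \<Longrightarrow> independent (y ` {j. e j < m}) \<and> inj_on y {j. e j < m}" for m
  proof (induction m)
    case 0 then show ?case by (simp add: independent_empty)
  next
    case (Suc m)
    then have IH: "independent (y ` {j. e j < m})" "inj_on y {j. e j < m}" by auto
    have "m \<in> {0..<CARD('n)}" using Suc.prems by simp
    then have "m \<in> e ` UNIV" using e by (simp add: bij_betw_def)
    then obtain k where k: "e k = m" by blast
    have inje': "inj e" using e by (simp add: bij_betw_def)
    have eq: "{j. e j < Suc m} = insert k {j. e j < m}"
    proof
      show "{j. e j < Suc m} \<subseteq> insert k {j. e j < m}"
      proof
        fix x assume "x \<in> {j. e j < Suc m}"
        then have "e x < m \<or> e x = m" by auto
        then show "x \<in> insert k {j. e j < m}"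
        proof
          assume "e x = m" then have "e x = e k" using k by simp
          then have "x = k" using injD[OF inje'] by blast
          then show ?thesis by simp
        qed simp
      qed
      show "insert k {j. e j < m} \<subseteq> {j. e j < Suc m}" using k by auto
    qed
    have nk: "y k \<notin> span (y ` {j. e j < m})" using ny[of k] k by simp
    have nk2: "y k \<notin> y ` {j. e j < m}"
    proof
      assume "y k \<in> y ` {j. e j < m}"
      then have "y k \<in> span (y ` {j. e j < m})" by (rule span_base)
      with nk show False by contradiction
    qed
    have "independent (insert (y k) (y ` {j. e j < m}))"
      using IH(1) nk by (simp add: independent_insert)
    moreover have "inj_on y (insert k {j. e j < m})"
      using IH(2) nk2 by (auto simp: inj_on_insert)
    ultimately show ?case by (simp add: eq)
  qed
  have U: "{j. e j < CARD('n)} = UNIV" using bij_betwE[OF e] by auto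
  from ind[of "CARD('n)"] have "independent (range y)" "inj y" by (simp_all add: U)
  then have cr: "card (range y) = CARD('n)" by (simp add: card_image)
  have "UNIV \<subseteq> span (range y)"
    by (rule card_ge_dim_independent) (use \<open>independent (range y)\<close> cr in simp_all)
  then show ?thesis by auto
qed

lemma count_dependent:
  fixes S :: "(real^'n) set" and r :: real
  assumes finS: "finite S"
    and hyp: "\<And>A. finite A \<Longrightarrow> card A < CARD('n) \<Longrightarrow> real (card (S \<inter> span A)) \<le> r"
  defines "X \<equiv> {y :: 'n \<Rightarrow> real^'n. \<forall>i. y i \<in> S}"
  defines "Y \<equiv> {y \<in> X. span (range y) = UNIV}"
  shows "real (card (X - Y)) \<le> real (card S) ^ (CARD('n) - 1) * (1 + real (CARD('n) - 1) * r)"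
proof -
  obtain e :: "'n \<Rightarrow> nat" where e: "bij_betw e UNIV {0..<CARD('n)}"
    using ex_bij_betw_finite_nat[of "UNIV :: 'n set"] by auto
  have inje: "inj e" using e by (simp add: bij_betw_def)
  define A where "A k = {y \<in> X. y k \<in> span (y ` {j. e j < e k})}" for k
  define rho where "rho k = (if e k = 0 then 1 else r)" for k
  have XPi: "X = PiE UNIV (\<lambda>_. S)" by (auto simp: X_def PiE_def Pi_def extensional_def)
  have finX: "finite X" unfolding XPi using finS by (intro finite_PiE) auto
  have sub: "X - Y \<subseteq> (\<Union>k. A k)"
  proof
    fix y assume y: "y \<in> X - Y"
    show "y \<in> (\<Union>k. A k)"
    proof (rule ccontr)
      assume "y \<notin> (\<Union>k. A k)"
      then have "\<And>k. y k \<notin> span (y ` {j. e j < e k})" using y by (auto simp: A_def)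
      then have "span (range y) = UNIV" by (rule indep_tuple[OF e])
      then show False using y by (auto simp: Y_def)
    qed
  qed
  have cardA: "real (card (A k)) \<le> real (card S) ^ (CARD('n) - 1) * rho k" for k
  proof -
    define J where "J = {j. e j < e k}"
    have kJ: "k \<notin> J" by (simp add: J_def)
    define Z where "Z = PiE UNIV (\<lambda>j. if j = k then {0} else S)"
    have finZ: "finite Z" unfolding Z_def using finS by (intro finite_PiE) auto
    define G where "G = (SIGMA z:Z. S \<inter> span (z ` J))"
    have AG: "A k \<subseteq> (\<lambda>(z, v). z(k := v)) ` G"
    proof
      fix y assume y: "y \<in> A k"
      have "y(k := 0) \<in> Z" using y by (auto simp: Z_def A_def X_def PiE_def extensional_def)
      moreover have "(y(k := 0)) ` J = y ` J" using kJ by auto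
      moreover have "y k \<in> S" using y by (auto simp: A_def X_def)
      moreover have "y k \<in> span (y ` J)" using y by (auto simp: A_def J_def)
      ultimately have "(y(k := 0), y k) \<in> G" by (auto simp: G_def)
      moreover have "y = (\<lambda>(z, v). z(k := v)) (y(k := 0), y k)" by simp
      ultimately show "y \<in> (\<lambda>(z, v). z(k := v)) ` G" by blast
    qed
    have "card (A k) \<le> card ((\<lambda>(z, v). z(k := v)) ` G)"
      by (rule card_mono[OF _ AG]) (auto simp: G_def intro!: finite_imageI finite_SigmaI finZ finS)
    also have "\<dots> \<le> card G" by (rule card_image_le) (auto simp: G_def intro!: finite_SigmaI finZ finS)
    also have "card G = (\<Sum>z\<in>Z. card (S \<inter> span (z ` J)))" unfolding G_def
      using finZ finS by simp
    finally have c1: "real (card (A k)) \<le> (\<Sum>z\<in>Z. real (card (S \<inter> span (z ` J))))"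
      by (simp flip: of_nat_sum)
    have each: "real (card (S \<inter> span (z ` J))) \<le> rho k" for z
    proof (cases "e k = 0")
      case True
      then have "J = {}" by (simp add: J_def)
      then have "S \<inter> span (z ` J) \<subseteq> {0}" by auto
      then have "card (S \<inter> span (z ` J)) \<le> 1" using card_mono[of "{0::real^'n}" "S \<inter> span (z ` J)"] by simp
      then show ?thesis using True by (simp add: rho_def)
    next
      case False
      have "card (z ` J) \<le> card J" by (rule card_image_le) simp
      also have "card J = card (e ` J)" using inje by (simp add: card_image inj_on_subset)
      also have "e ` J \<subseteq> {0..<e k}" by (auto simp: J_def)
      then have "card (e ` J) \<le> e k" using card_mono[of "{0..<e k}" "e ` J"] by simp
      also have "e k < CARD('n)" using e by (auto simp: bij_betw_def)
      finally have "card (z ` J) < CARD('n)" by simp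
      then show ?thesis using hyp[of "z ` J"] False by (simp add: rho_def)
    qed
    have "(\<Sum>z\<in>Z. real (card (S \<inter> span (z ` J)))) \<le> (\<Sum>z\<in>Z. rho k)"
      by (rule sum_mono) (rule each)
    also have "\<dots> = real (card Z) * rho k" by simp
    also have "card Z = card S ^ (CARD('n) - 1)"
    proof -
      have "card Z = (\<Prod>j\<in>UNIV. card (if j = k then {0::real^'n} else S))"
        unfolding Z_def by (rule card_PiE) simp
      also have "\<dots> = (\<Prod>j\<in>UNIV. if j = k then 1 else card S)"
        by (intro prod.cong) auto
      also have "\<dots> = card S ^ (CARD('n) - 1)"
        by (simp add: prod.remove[of UNIV k] card_Diff_singleton)
      finally show ?thesis .
    qed
    finally show ?thesis using c1 by simp
  qed
  have "card (X - Y) \<le> card (\<Union>k. A k)"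
    by (rule card_mono[OF _ sub]) (auto simp: A_def intro: finite_subset[OF _ finX])
  also have "\<dots> \<le> (\<Sum>k\<in>UNIV. card (A k))" by (rule card_UN_le) simp
  finally have "real (card (X - Y)) \<le> (\<Sum>k\<in>UNIV. real (card (A k)))" by (simp flip: of_nat_sum)
  also have "\<dots> \<le> (\<Sum>k\<in>UNIV. real (card S) ^ (CARD('n) - 1) * rho k)"
    by (rule sum_mono) (rule cardA)
  also have "\<dots> = real (card S) ^ (CARD('n) - 1) * (\<Sum>k\<in>UNIV. rho k)"
    by (simp add: sum_distrib_left)
  also have "(\<Sum>k\<in>UNIV. rho k) = (\<Sum>m\<in>{0..<CARD('n)}. if m = 0 then 1 else r)"
    unfolding rho_def using sum.reindex_bij_betw[OF e, of "\<lambda>m. if m = 0 then 1 else r"] by simp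
  also have "\<dots> = 1 + real (CARD('n) - 1) * r"
  proof -
    have "{0..<CARD('n)} = insert 0 {1..<CARD('n)}" by auto
    then show ?thesis by simp
  qed
  finally show ?thesis .
qed

lemma num_ge4:
  fixes n :: nat and c :: real
  assumes n: "n \<ge> 4" and c: "c \<ge> 8 * real n ^ 2"
  shows "2 ^ n + 2 * real (n - 1) * sqrt (real n) * (c + 2) ^ (n - 1) \<le> (c - 2) ^ n / 2"
proof -
  define a where "a = c - 2"
  obtain k where nk: "n = Suc k" using n by (cases n) auto
  define N where "N = real n"
  have nr: "N \<ge> 4" using n by (simp add: N_def)
  have NN: "4 * N \<le> N * N" using nr by (intro mult_right_mono) auto
  have a: "a \<ge> 8 * (N * N) - 2" using c by (simp add: a_def N_def power2_eq_square)
  have apos: "a \<ge> 2" using a NN nr by linarith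
  have n1: "real (n - 1) = N - 1" using n by (simp add: N_def of_nat_diff)
  have q: "real (n - 1) * (4 / a) \<le> 1"
  proof -
    have "real (n - 1) * 4 \<le> a" using n1 a NN nr by linarith
    then show ?thesis using apos by (simp add: field_simps)
  qed
  have e1: "(1 + 4 / a) ^ (n - 1) \<le> 3"
  proof -
    have "(1 + 4 / a) ^ (n - 1) \<le> exp (4 / a) ^ (n - 1)"
      by (rule power_mono) (use apos in auto)
    also have "\<dots> = exp (real (n - 1) * (4 / a))" by (rule exp_of_nat_mult[symmetric])
    also have "\<dots> \<le> exp 1" using q by simp
    also have "\<dots> \<le> 3" by (rule exp_le)
    finally show ?thesis .
  qed
  have p1: "(c + 2) ^ (n - 1) \<le> 3 * a ^ (n - 1)"
  proof -
    have "c + 2 = a * (1 + 4 / a)" using apos by (simp add: a_def field_simps)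
    then have "(c + 2) ^ (n - 1) = a ^ (n - 1) * (1 + 4 / a) ^ (n - 1)" by (simp add: power_mult_distrib)
    also have "\<dots> \<le> a ^ (n - 1) * 3" using e1 apos by (intro mult_left_mono) auto
    finally show ?thesis by simp
  qed
  have sq: "sqrt N \<le> N / 2"
  proof -
    have "N \<le> (N / 2)^2" using NN by (simp add: power2_eq_square field_simps)
    then have "sqrt N \<le> sqrt ((N/2)^2)" by (rule real_sqrt_le_mono)
    also have "\<dots> = N / 2" using nr by simp
    finally show ?thesis .
  qed
  have p2: "(2::real) ^ n \<le> 2 * a ^ (n - 1)"
  proof -
    have "(2::real) ^ n = 2 * 2 ^ (n - 1)" using nk by simp
    also have "\<dots> \<le> 2 * a ^ (n - 1)" using apos by (intro mult_left_mono power_mono) auto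
    finally show ?thesis .
  qed
  have an: "a ^ n = a * a ^ (n - 1)" using nk by simp
  have A0: "0 \<le> a ^ (n - 1)" using apos by simp
  have "2 * real (n - 1) * sqrt (real n) * (c + 2) ^ (n - 1) \<le> 2 * (N - 1) * (N / 2) * (3 * a ^ (n - 1))"
    unfolding n1 N_def[symmetric]
    using sq p1 nr apos by (intro mult_mono) (auto simp: a_def)
  then have "2 ^ n + 2 * real (n - 1) * sqrt (real n) * (c + 2) ^ (n - 1) \<le> (2 + 3 * N * (N - 1)) * a ^ (n - 1)"
    using p2 by (simp add: algebra_simps)
  also have "\<dots> \<le> (a / 2) * a ^ (n - 1)"
  proof (rule mult_right_mono[OF _ A0])
    have "2 + 3 * N * (N - 1) = 2 + 3 * (N * N) - 3 * N" by (simp add: algebra_simps)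
    then show "2 + 3 * N * (N - 1) \<le> a / 2" using a NN nr by linarith
  qed
  also have "\<dots> = (c - 2) ^ n / 2" using an by (simp add: a_def)
  finally show ?thesis .
qed

lemma num_main:
  fixes n :: nat and c :: real
  assumes n: "n \<ge> 1" and c: "c \<ge> 8 * real n powr (real n / 2)"
  shows "2 ^ n + 2 * real (n - 1) * sqrt (real n) * (c + 2) ^ (n - 1) \<le> (c - 2) ^ n / 2"
proof -
  consider "n = 1" | "n = 2" | "n = 3" | "n \<ge> 4" using n by linarith
  then show ?thesis
  proof cases
    case 1
    then have "c \<ge> 8" using c by simp
    then show ?thesis using 1 by simp
  next
    case 2
    then have c16: "c \<ge> 16" using c by simp
    have s2: "sqrt 2 \<le> 3/2"
      by (rule real_le_lsqrt) (auto simp: power2_eq_square)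
    have "2 * sqrt 2 * (c + 2) \<le> 2 * (3/2) * (c + 2)"
      using s2 c16 by (intro mult_right_mono mult_left_mono) auto
    moreover have "(c - 2)^2 \<ge> 14 * (c - 2)"
    proof -
      have "14 * (c - 2) \<le> (c - 2) * (c - 2)" using c16 by (intro mult_right_mono) auto
      then show ?thesis by (simp add: power2_eq_square)
    qed
    ultimately show ?thesis using 2 c16 by (simp add: numeral_2_eq_2)
  next
    case 3
    have s3: "sqrt 3 \<ge> 17/10" by (rule real_le_rsqrt) (auto simp: power2_eq_square)
    have p: "(3::real) powr (3/2) = 3 * sqrt 3"
    proof -
      have "(3::real) powr (3/2) = 3 powr (1 + 1/2)" by simp
      also have "\<dots> = 3 powr 1 * 3 powr (1/2)" by (rule powr_add)
      also have "\<dots> = 3 * 3 powr (1/2)" by simp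
      also have "\<dots> = 3 * sqrt 3" by (simp add: powr_half_sqrt)
      finally show ?thesis .
    qed
    have "c \<ge> 24 * sqrt 3" using c 3 p by simp
    then have c40: "c \<ge> 408/10" using s3 by linarith
    define a where "a = c - 2"
    have a: "a \<ge> 388/10" using c40 by (simp add: a_def)
    have s3u: "sqrt 3 \<le> 175/100" by (rule real_le_lsqrt) (auto simp: power2_eq_square)
    have "(c + 2)^2 \<le> (111/100 * a)^2"
      using a by (intro power_mono) (auto simp: a_def)
    moreover have "(111/100 * a)^2 = 12321/10000 * a^2" by (simp add: power2_eq_square)
    ultimately have q: "(c + 2)^2 \<le> 12321/10000 * a^2" by simp
    have "2 * real (3 - 1) * sqrt (real 3) * (c + 2) ^ (3 - 1) = 4 * sqrt 3 * (c + 2)^2" by simp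
    also have "\<dots> \<le> 4 * (175/100) * (12321/10000 * a^2)"
      using s3u q by (intro mult_mono) auto
    finally have l: "2 * real (3 - 1) * sqrt (real 3) * (c + 2) ^ (3 - 1) \<le> 4 * (175/100) * (12321/10000 * a^2)" .
    have "a^3 / 2 \<ge> (388/20) * a^2"
    proof -
      have "a^3 = a * a^2" by (simp add: power3_eq_cube power2_eq_square)
      moreover have "a * a^2 \<ge> (388/10) * a^2" using a by (intro mult_right_mono) auto
      ultimately show ?thesis by simp
    qed
    moreover have "a^2 \<ge> 1"
    proof -
      have "1 * 1 \<le> a * a" using a by (intro mult_mono) auto
      then show ?thesis by (simp add: power2_eq_square)
    qed
    ultimately show ?thesis using 3 l by (simp add: a_def)
  next
    case 4
    have "real n ^ 2 = real n powr 2" by (simp add: powr_numeral)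
    also have "\<dots> \<le> real n powr (real n / 2)" using 4 by (intro powr_mono) auto
    finally have "c \<ge> 8 * real n ^ 2" using c by linarith
    then show ?thesis by (rule num_ge4[OF 4])
  qed
qed

lemma scale_num:
  fixes n :: nat and B \<nu> :: real
  assumes n: "n \<ge> 1" and nu: "\<nu> > 0" and B: "B \<ge> 8 * real n powr (real n / 2) * \<nu>"
  shows "(2 * \<nu>) ^ n + real (n - 1) * (sqrt (real n) * (2 * \<nu>) * (B + 2 * \<nu>) ^ (n - 1)) \<le> (B - 2 * \<nu>) ^ n / 2"
proof -
  define c where "c = B / \<nu>"
  have Bc: "B = c * \<nu>" using nu by (simp add: c_def)
  have c: "c \<ge> 8 * real n powr (real n / 2)" using B nu by (simp add: c_def field_simps)
  have N: "2 ^ n + 2 * real (n - 1) * sqrt (real n) * (c + 2) ^ (n - 1) \<le> (c - 2) ^ n / 2"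
    by (rule num_main[OF n c])
  obtain k where nk: "n = Suc k" using n by (cases n) auto
  have b1: "B + 2 * \<nu> = \<nu> * (c + 2)" by (simp add: Bc algebra_simps)
  have b2: "B - 2 * \<nu> = \<nu> * (c - 2)" by (simp add: Bc algebra_simps)
  have ineq: "\<nu> ^ n * (2 ^ n + 2 * real (n - 1) * sqrt (real n) * (c + 2) ^ (n - 1)) \<le> \<nu> ^ n * ((c - 2) ^ n / 2)"
    using N nu by (intro mult_left_mono) auto
  have e2: "\<nu> ^ n * (2 ^ n + 2 * real (n - 1) * sqrt (real n) * (c + 2) ^ (n - 1))
      = 2 ^ n * \<nu> ^ n + real (n - 1) * (sqrt (real n) * (2 * \<nu>) * (\<nu> ^ k * (c + 2) ^ k))"
  proof -
    have aux: "(y * q::real) * (a + 2 * t * s * p) = a * (y * q) + t * (s * (2 * y) * (q * p))" for y q a t s p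
      by (simp add: algebra_simps)
    have h1: "\<nu> ^ n = \<nu> * \<nu> ^ k" by (simp add: nk)
    have h2: "(c + 2) ^ (n - 1) = (c + 2) ^ k" by (simp add: nk)
    show ?thesis unfolding h1 h2 by (rule aux)
  qed
  have e3: "2 ^ n * \<nu> ^ n = (2 * \<nu>) ^ n" by (rule power_mult_distrib[symmetric])
  have e4: "\<nu> ^ k * (c + 2) ^ k = (B + 2 * \<nu>) ^ (n - 1)" unfolding b1 nk by (simp add: power_mult_distrib)
  have e5: "\<nu> ^ n * ((c - 2) ^ n / 2) = (B - 2 * \<nu>) ^ n / 2" unfolding b2 by (simp add: power_mult_distrib)
  have "(2 * \<nu>) ^ n + real (n - 1) * (sqrt (real n) * (2 * \<nu>) * (B + 2 * \<nu>) ^ (n - 1))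
        = \<nu> ^ n * (2 ^ n + 2 * real (n - 1) * sqrt (real n) * (c + 2) ^ (n - 1))"
    by (simp only: e2 e3 e4)
  also have "\<dots> \<le> \<nu> ^ n * ((c - 2) ^ n / 2)" by (rule ineq)
  also have "\<dots> = (B - 2 * \<nu>) ^ n / 2" by (rule e5)
  finally show ?thesis .
qed

theorem corollary2p3:
  fixes L :: "(real^'n) set" and B :: real
  assumes "full_rank_lattice L"
    and "B \<ge> 8 * real CARD('n) powr (real CARD('n) / 2) * covering_radius L"
  defines "S \<equiv> {v \<in> L. \<forall>j. 0 \<le> v $ j \<and> v $ j < B}"
  defines "X \<equiv> {y :: 'n \<Rightarrow> real^'n. \<forall>i. y i \<in> S}"
  defines "Y \<equiv> {y \<in> X. span (range y) = UNIV}"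
  shows "real (card Y) \<ge> real (card X) / 2"
proof -
  obtain b :: "'n \<Rightarrow> real^'n" where b: "inj b" "independent (range b)"
    and Lb: "L = {x. \<exists>c :: 'n \<Rightarrow> int. x = (\<Sum>i\<in>UNIV. of_int (c i) *\<^sub>R b i)}"
    using assms(1) unfolding full_rank_lattice_def by blast
  interpret lbasis b using b by unfold_locales
  have LL: "L = Lat" by (simp add: Lb Lat_def)
  have cr: "covering_radius L = nu" by (simp add: covering_radius_def nu_def rho_def LL)
  have SS: "S = SB B" by (simp add: S_def SB_def LL)
  define n where "n = CARD('n)"
  have n1: "n \<ge> 1" by (simp add: n_def Suc_le_eq)
  define m where "m = measure lebesgue V"
  define s where "s = card (SB B)"
  have nup: "nu > 0" by (rule nu_pos)
  have Bge: "B \<ge> 8 * real n powr (real n / 2) * nu" using assms(2) cr by (simp add: n_def)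
  have "1 \<le> real n powr (real n / 2)" using n1 by (intro ge_one_powr_ge_zero) auto
  then have "8 * nu \<le> 8 * real n powr (real n / 2) * nu" using nup by simp
  then have B2: "2 * nu < B" using Bge nup by linarith
  have low: "(B - 2 * nu) ^ n \<le> real s * m"
    unfolding s_def m_def n_def by (rule lower_bound[OF B2])
  have lowpos: "0 < (B - 2 * nu) ^ n" using B2 by simp
  have mpos: "m > 0"
  proof -
    have "0 \<le> m" by (simp add: m_def)
    moreover have "m \<noteq> 0" using low lowpos by auto
    ultimately show ?thesis by simp
  qed
  have mle: "m \<le> (2 * nu) ^ n"
  proof -
    have sub: "V \<subseteq> cbox (\<chi> j. - nu) (\<chi> j. nu)"
    proof
      fix v assume v: "v \<in> V"
      have "\<bar>v$j\<bar> \<le> nu" for j using component_le_norm_cart[of v j] V_nu[OF v] by linarith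
      then have "- nu \<le> v$j \<and> v$j \<le> nu" for j by (metis abs_le_iff minus_le_iff)
      then show "v \<in> cbox (\<chi> j. - nu) (\<chi> j. nu)" by (simp add: mem_box_cart)
    qed
    have "m \<le> measure lebesgue (cbox (\<chi> j. - nu) (\<chi> j. nu) :: (real^'n) set)"
      unfolding m_def by (rule measure_mono_fmeasurable[OF sub]) (auto intro: fmeasurableD V_lmeas)
    also have "\<dots> = (\<Prod>j\<in>(UNIV::'n set). nu - (- nu))"
    proof -
      have "cbox (\<chi> j. - nu) (\<chi> j. nu) \<noteq> ({} :: (real^'n) set)" using nup by (auto simp: interval_ne_empty_cart)
      then show ?thesis by (simp add: content_cbox_if_cart)
    qed
    also have "\<dots> = (2 * nu) ^ n" by (simp add: n_def)
    finally show ?thesis .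
  qed
  define r where "r = sqrt (real n) * (2 * nu) * (B + 2 * nu) ^ (n - 1) / m"
  have hyp: "real (card (SB B \<inter> span A)) \<le> r" if A: "finite A" "card A < CARD('n)" for A
  proof -
    have "dim A \<le> card A" by (rule dim_le_card'[OF A(1)])
    then have dA: "dim A < DIM(real^'n)" using A(2) by simp
    obtain u :: "real^'n" where u: "u \<noteq> 0" "\<And>y. y \<in> span A \<Longrightarrow> orthogonal u y"
      using orthogonal_to_subspace_exists[OF dA] by blast
    have "real (card (SB B \<inter> span A)) * m \<le> sqrt (real n) * (2 * nu) * (B + 2 * nu) ^ (n - 1)"
      unfolding m_def n_def
      by (rule upper_bound[OF u(1)]) (use u(2) B2 nup in \<open>auto simp: orthogonal_def\<close>)
    then show ?thesis using mpos by (simp add: r_def field_simps)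
  qed
  have XX: "X = {y :: 'n \<Rightarrow> real^'n. \<forall>i. y i \<in> SB B}" by (simp add: X_def SS)
  have cnt: "real (card (X - Y)) \<le> real s ^ (n - 1) * (1 + real (n - 1) * r)"
    unfolding Y_def XX s_def n_def
    by (rule count_dependent[OF SB_finite hyp])
  have key: "1 + real (n - 1) * r \<le> real s / 2"
  proof -
    have "m * (1 + real (n - 1) * r) = m + real (n - 1) * (sqrt (real n) * (2 * nu) * (B + 2 * nu) ^ (n - 1))"
      using mpos by (simp add: r_def field_simps)
    also have "\<dots> \<le> (2 * nu) ^ n + real (n - 1) * (sqrt (real n) * (2 * nu) * (B + 2 * nu) ^ (n - 1))"
      using mle by simp
    also have "\<dots> \<le> (B - 2 * nu) ^ n / 2" by (rule scale_num[OF n1 nup Bge])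
    also have "\<dots> \<le> m * (real s / 2)" using low by (simp add: mult.commute)
    finally show ?thesis using mpos by simp
  qed
  have XPi: "X = PiE UNIV (\<lambda>_. SB B)" by (auto simp: XX PiE_def Pi_def extensional_def)
  have cX: "card X = s ^ n" unfolding XPi s_def n_def by (simp add: card_PiE)
  have finX: "finite X" unfolding XPi using SB_finite by (intro finite_PiE) auto
  obtain k where nk: "n = Suc k" using n1 by (cases n) auto
  have "real (card (X - Y)) \<le> real s ^ (n - 1) * (real s / 2)"
    using cnt key by (meson order_trans mult_left_mono zero_le_power of_nat_0_le_iff)
  also have "\<dots> = real (card X) / 2" by (simp add: cX nk)
  finally have h: "real (card (X - Y)) \<le> real (card X) / 2" .
  have YX: "Y \<subseteq> X" by (auto simp: Y_def)
  have "card (X - Y) = card X - card Y" by (rule card_Diff_subset[OF finite_subset[OF YX finX] YX])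
  moreover have "card Y \<le> card X" by (rule card_mono[OF finX YX])
  ultimately have "real (card (X - Y)) = real (card X) - real (card Y)" by simp
  then show ?thesis using h by simp
qed

end
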